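(* Let $H$ be a real Hilbert space, $C\subseteq H$ nonempty, closed and convex, and $F:H\to H$ an operator such that (A1) $S_D\neq\emptyset$; (A2) $F$ is quasimonotone; (A3) $F$ is uniformly continuous on $H$. Let $\{z_n\},\{w_n\},\{\lambda_n\}$ be the sequences generated by Algorithm 3.1 (with $\epsilon=0$), assume $z_n\neq w_n$ for all $n$, and assume $\lambda_n\to0$ as $n\to\infty$. Let $I:=\{n\in\mathbb{N}:\lambda_{n+1}<\lambda_n\}$ and let $\{n_k\}_{k\ge1}$ be an enumeration of all indices in $I$. Then (i) $\lim_{k\to\infty}\frac{\|z_{n_k}-w_{n_k}\|}{\lambda_{n_k}}=0$; (ii) $\lim_{k\to\infty}\frac{\|z_{n_k+1}-z_{n_k}\|}{\lambda_{n_k}}=0$.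
   Context: $P_C$ denotes the metric projection onto $C$. $S_D$ is the set of $z\in C$ with $\langle F(v),v-z\rangle\ge0$ for all $v\in C$. $F$ is quasimonotone if $\langle F(w),z-w\rangle>0$ implies $\langle F(z),z-w\rangle\ge0$ for all $w,z\in H$. Algorithm 3.1 (with $\epsilon=0$): fix $\mu\in(0,1)$, a sequence $\{\xi_n\}\subset[0,\infty)$ with $\sum_{n}\xi_n<\infty$, $z_1\in H$ and $\lambda_1>0$. For $n=1,2,\dots$: $w_n=P_C(z_n-\lambda_nF(z_n))$; $z_{n+1}=w_n+\lambda_n(F(z_n)-F(w_n))$; $\lambda_{n+1}=\min\{\frac{\mu\|z_n-w_n\|}{\|F(z_n)-F(w_n)\|},\lambda_n+\xi_n\}$ if $F(z_n)\neq F(w_n)$, and $\lambda_{n+1}=\lambda_n+\xi_n$ otherwise. *)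

theory Defs
  imports "HOL-Analysis.Analysis"
begin

text \<open>Metric projection onto C: the (unique, for C nonempty closed convex in a
Hilbert space) point of C nearest to x.\<close>
definition metric_proj :: "'a::real_inner set \<Rightarrow> 'a \<Rightarrow> 'a" where
  "metric_proj C x = (THE y. y \<in> C \<and> (\<forall>z\<in>C. norm (x - y) \<le> norm (x - z)))"

definition SD :: "'a::real_inner set \<Rightarrow> ('a \<Rightarrow> 'a) \<Rightarrow> 'a set" where
  "SD C F = {z \<in> C. \<forall>v\<in>C. inner (F v) (v - z) \<ge> 0}"

definition quasimonotone :: "('a::real_inner \<Rightarrow> 'a) \<Rightarrow> bool" where
  "quasimonotone F \<longleftrightarrow>
     (\<forall>w z. inner (F w) (z - w) > 0 \<longrightarrow> inner (F z) (z - w) \<ge> 0)"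

end

theory Submission imports Defs begin

lemma uc_growth:
  fixes F :: "'a::real_normed_vector \<Rightarrow> 'b::real_normed_vector"
  assumes "uniformly_continuous_on UNIV F"
  obtains d where "d > 0" "\<And>x y. norm (F x - F y) \<le> norm (x - y) / d + 2"
proof -
  obtain d where d: "d > 0" and hd: "\<And>x y. dist x y < d \<Longrightarrow> dist (F x) (F y) < 1"
    using assms unfolding uniformly_continuous_on_def
    by (metis UNIV_I zero_less_one)
  have step: "\<And>x y. norm (x - y) < real m * d \<Longrightarrow> norm (F x - F y) \<le> real m" for m
  proof (induction m)
    case 0 then show ?case using d by simp
  next
    case (Suc m)
    fix x y :: 'a
    assume a: "norm (x - y) < real (Suc m) * d"
    define y' where "y' = y + (1 / real (Suc m)) *\<^sub>R (x - y)"
    have e1: "x - y' = (real m / real (Suc m)) *\<^sub>R (x - y)"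
    proof -
      have "x - y' = (x - y) - (1 / real (Suc m)) *\<^sub>R (x - y)" unfolding y'_def by (simp add: algebra_simps)
      also have "\<dots> = (1 - 1 / real (Suc m)) *\<^sub>R (x - y)" by (simp add: scaleR_left_diff_distrib)
      also have "1 - 1 / real (Suc m) = real m / real (Suc m)" by (simp add: field_simps)
      finally show ?thesis .
    qed
    have e2: "y' - y = (1 / real (Suc m)) *\<^sub>R (x - y)" unfolding y'_def by simp
    have n0: "norm (x - y') = real m / real (Suc m) * norm (x - y)" using e1 by simp
    have "norm (F x - F y') \<le> real m"
    proof (cases m)
      case 0 then show ?thesis using e1 by simp
    next
      case (Suc k)
      then have pos: "real m / real (Suc m) > 0" by simp
      have "real m / real (Suc m) * norm (x - y) < real m / real (Suc m) * (real (Suc m) * d)"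
        by (rule mult_strict_left_mono[OF a pos])
      also have "\<dots> = real m * d" by simp
      finally show ?thesis using Suc.IH n0 by simp
    qed
    moreover have "norm (y' - y) < d"
    proof -
      have "norm (y' - y) = norm (x - y) / real (Suc m)" using e2 by simp
      also have "\<dots> < d" using a d by (simp add: divide_less_eq mult.commute)
      finally show ?thesis .
    qed
    then have "norm (F y' - F y) < 1" using hd[of y' y] by (simp add: dist_norm)
    moreover have "norm (F x - F y) \<le> norm (F x - F y') + norm (F y' - F y)"
      using norm_triangle_ineq[of "F x - F y'" "F y' - F y"] by simp
    ultimately show "norm (F x - F y) \<le> real (Suc m)" by simp
  qed
  show ?thesis
  proof (rule that[OF d])
    fix x y :: 'a
    define m where "m = nat \<lceil>norm (x - y) / d\<rceil> + 1"
    have m1: "norm (x - y) / d < real m" unfolding m_def by linarith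
    have t0: "norm (x - y) / d \<ge> 0" using d by simp
    then have c0: "\<lceil>norm (x - y) / d\<rceil> \<ge> 0" by simp
    have c1: "of_int \<lceil>norm (x - y) / d\<rceil> \<le> norm (x - y) / d + 1" by (rule of_int_ceiling_le_add_one)
    have "real (nat \<lceil>norm (x - y) / d\<rceil>) = of_int \<lceil>norm (x - y) / d\<rceil>" using c0 by simp
    then have m2: "real m \<le> norm (x - y) / d + 2" unfolding m_def using c1 by linarith
    have "norm (x - y) < real m * d" using m1 d by (simp add: field_simps)
    then show "norm (F x - F y) \<le> norm (x - y) / d + 2" using step m2 by force
  qed
qed

lemma inj_tendsto_top:
  assumes "bij_betw nk {1..} (I::nat set)"
  shows "\<forall>\<^sub>F k in sequentially. nk k \<ge> N"
proof -
  have inj: "inj_on nk {1..}" using assms bij_betw_def by blast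
  have "{k\<in>{1..}. nk k < N} \<subseteq> {1..}" by auto
  have fin: "finite {k\<in>{1..}. nk k < N}"
  proof (rule finite_imageD)
    show "finite (nk ` {k\<in>{1..}. nk k < N})" by (rule finite_subset[of _ "{..<N}"]) auto
    show "inj_on nk {k\<in>{1..}. nk k < N}" using inj by (rule inj_on_subset) auto
  qed
  then obtain M where "\<forall>k\<in>{k\<in>{1..}. nk k < N}. k < M"
    by (metis finite_nat_bounded lessThan_iff subsetD)
  then have "\<forall>k\<ge>max M 1. nk k \<ge> N" by fastforce
  then show ?thesis unfolding eventually_sequentially by blast
qed
theorem lemma4p3:
  fixes C :: "'a::{real_inner,complete_space} set"
    and F :: "'a \<Rightarrow> 'a"
    and mu :: real and xi :: "nat \<Rightarrow> real"
    and z w :: "nat \<Rightarrow> 'a" and lam :: "nat \<Rightarrow> real"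
    and nk :: "nat \<Rightarrow> nat"
  assumes C: "C \<noteq> {}" "closed C" "convex C"
    and A1: "SD C F \<noteq> {}"
    and A2: "quasimonotone F"
    and A3: "uniformly_continuous_on UNIV F"
    and mu: "0 < mu" "mu < 1"
    and xi: "\<And>n. xi n \<ge> 0" "summable xi"
    and lam1: "lam 1 > 0"
    and w_def: "\<And>n. n \<ge> 1 \<Longrightarrow> w n = metric_proj C (z n - lam n *\<^sub>R F (z n))"
    and z_def: "\<And>n. n \<ge> 1 \<Longrightarrow> z (Suc n) = w n + lam n *\<^sub>R (F (z n) - F (w n))"
    and lam_def: "\<And>n. n \<ge> 1 \<Longrightarrow> lam (Suc n) =
        (if F (z n) \<noteq> F (w n)
         then min (mu * norm (z n - w n) / norm (F (z n) - F (w n))) (lam n + xi n)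
         else lam n + xi n)"
    and zw: "\<And>n. n \<ge> 1 \<Longrightarrow> z n \<noteq> w n"
    and lam_lim: "lam \<longlonglongrightarrow> 0"
    and enum: "bij_betw nk {1..} {n. n \<ge> 1 \<and> lam (Suc n) < lam n}"
  shows "(\<lambda>k. norm (z (nk k) - w (nk k)) / lam (nk k)) \<longlonglongrightarrow> 0 \<and>
         (\<lambda>k. norm (z (Suc (nk k)) - z (nk k)) / lam (nk k)) \<longlonglongrightarrow> 0"
proof -
  define I where "I = {n. n \<ge> 1 \<and> lam (Suc n) < lam n}"
  have lampos: "lam n > 0" if "n \<ge> 1" for n
    using that
  proof (induction n rule: dec_induct)
    case base then show ?case using lam1 by simp
  next
    case (step n)
    have p2: "lam n + xi n > 0" using step.IH xi(1)[of n] by linarith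
    show ?case
    proof (cases "F (z n) \<noteq> F (w n)")
      case True
      have "norm (z n - w n) > 0" using zw[OF step.hyps(1)] by simp
      moreover have "norm (F (z n) - F (w n)) > 0" using True by simp
      ultimately have "mu * norm (z n - w n) / norm (F (z n) - F (w n)) > 0" using mu by simp
      then show ?thesis using lam_def[OF step.hyps(1)] True p2 by simp
    next
      case False
      then show ?thesis using lam_def[OF step.hyps(1)] p2 by simp
    qed
  qed
  have keyI: "F (z n) \<noteq> F (w n) \<and> lam (Suc n) = mu * norm (z n - w n) / norm (F (z n) - F (w n))"
    if "n \<in> I" for n
  proof -
    have n1: "n \<ge> 1" and lt: "lam (Suc n) < lam n" using that I_def by auto
    have ne: "F (z n) \<noteq> F (w n)"
    proof
      assume "F (z n) = F (w n)"
      then have "lam (Suc n) = lam n + xi n" using lam_def[OF n1] by simp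
      then show False using lt xi(1)[of n] by linarith
    qed
    have "lam (Suc n) = min (mu * norm (z n - w n) / norm (F (z n) - F (w n))) (lam n + xi n)"
      using lam_def[OF n1] ne by simp
    then show ?thesis using ne lt xi(1)[of n] by (auto simp: min_def split: if_splits)
  qed
  obtain dl where dl: "dl > 0" and grow: "\<And>x y. norm (F x - F y) \<le> norm (x - y) / dl + 2"
    using uc_growth[OF A3] by blast
  have G: "\<exists>N. \<forall>n\<in>I. n \<ge> N \<longrightarrow> norm (z n - w n) / lam n < e \<and> norm (z (Suc n) - z n) / lam n < e"
    if e: "e > 0" for e
  proof -
    have "e * mu / 2 > 0" using e mu by simp
    then obtain eta where eta: "eta > 0" and heta: "\<And>x y. dist x y < eta \<Longrightarrow> dist (F x) (F y) < e * mu / 2"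
      using A3 unfolding uniformly_continuous_on_def by (metis UNIV_I)
    define c where "c = min (mu * dl / 2) (mu * eta / 4)"
    have c: "c > 0" using mu dl eta by (simp add: c_def)
    obtain N where hN: "\<And>n. n \<ge> N \<Longrightarrow> norm (lam n) < c"
      using lam_lim c unfolding LIMSEQ_iff by force
    show ?thesis
    proof (intro exI ballI impI)
      fix n assume nI: "n \<in> I" and nN: "N \<le> n"
      have n1: "n \<ge> 1" and lt: "lam (Suc n) < lam n" using nI I_def by auto
      define a where "a = norm (z n - w n)"
      define D where "D = norm (F (z n) - F (w n))"
      define L' where "L' = lam (Suc n)"
      define L where "L = lam n"
      have L'pos: "L' > 0" using lampos[of "Suc n"] n1 by (simp add: L'_def)
      have LL: "L' < L" using lt by (simp add: L'_def L_def)
      have Dpos: "D > 0" using keyI[OF nI] by (simp add: D_def)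
      have L'eq: "L' = mu * a / D" using keyI[OF nI] by (simp add: L'_def a_def D_def)
      have muA: "mu * a = L' * D" using L'eq Dpos by (simp add: field_simps)
      have a0: "a \<ge> 0" by (simp add: a_def)
      have Dle: "D \<le> a / dl + 2" using grow by (simp add: D_def a_def)
      have L'c: "L' < c" using hN[of "Suc n"] nN L'pos by (simp add: L'_def)
      have L'1: "L' / dl < mu / 2" using L'c dl by (simp add: c_def divide_less_eq)
      have "mu * a \<le> L' * (a / dl + 2)" using muA Dle L'pos by (simp add: mult_left_mono)
      also have "\<dots> = (L' / dl) * a + 2 * L'" by (simp add: field_simps)
      also have "\<dots> \<le> (mu / 2) * a + 2 * L'" using L'1 a0 mult_right_mono[of "L' / dl" "mu / 2" a] by linarith
      finally have "mu * a / 2 \<le> 2 * L'" by simp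
      then have "a \<le> 4 * L' / mu" using mu by (simp add: field_simps)
      also have "\<dots> < eta" using L'c mu by (simp add: c_def field_simps)
      finally have aeta: "a < eta" .
      have Dsmall: "D < e * mu / 2" using heta[of "z n" "w n"] aeta by (simp add: dist_norm a_def D_def)
      have r1': "a / L' = D / mu" using L'eq Dpos L'pos mu by (auto simp: field_simps)
      have r1: "a / L \<le> a / L'" using a0 L'pos LL by (simp add: frac_le)
      have "D / mu < e / 2" using Dsmall mu by (simp add: divide_less_eq)
      then have r1b: "a / L < e / 2" using r1 r1' by linarith
      have eqz: "z (Suc n) - z n = (w n - z n) + L *\<^sub>R (F (z n) - F (w n))"
        using z_def[OF n1] by (simp add: L_def algebra_simps)
      have "norm (z (Suc n) - z n) = norm ((w n - z n) + L *\<^sub>R (F (z n) - F (w n)))"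
        by (rule arg_cong[OF eqz])
      also have "\<dots> \<le> norm (w n - z n) + norm (L *\<^sub>R (F (z n) - F (w n)))"
        by (rule norm_triangle_ineq)
      also have "\<dots> = a + L * D"
        using L'pos LL by (simp add: a_def D_def norm_minus_commute)
      finally have "norm (z (Suc n) - z n) \<le> a + L * D" .
      then have "norm (z (Suc n) - z n) / L \<le> (a + L * D) / L"
        using L'pos LL by (simp add: divide_right_mono)
      also have "\<dots> = a / L + D" using L'pos LL by (simp add: field_simps)
      also have "\<dots> < e / 2 + e * mu / 2" using r1b Dsmall by linarith
      also have "\<dots> \<le> e" using mu e by (simp add: field_simps)
      finally have r2: "norm (z (Suc n) - z n) / L < e" .
      show "norm (z n - w n) / lam n < e \<and> norm (z (Suc n) - z n) / lam n < e"
      proof -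
        have "a / L < e" using r1b e by linarith
        then show ?thesis using r2 by (simp add: a_def L_def)
      qed
    qed
  qed
  have nkI: "nk k \<in> I" if "k \<ge> 1" for k
    using enum that unfolding bij_betw_def I_def by auto
  have nk1: "nk k \<ge> 1" if "k \<ge> 1" for k using nkI[OF that] I_def by auto
  show ?thesis
  proof (intro conjI; unfold LIMSEQ_iff; intro allI impI)
    fix r :: real assume r: "r > 0"
    obtain N where hN: "\<forall>n\<in>I. n \<ge> N \<longrightarrow> norm (z n - w n) / lam n < r \<and> norm (z (Suc n) - z n) / lam n < r"
      using G[OF r] by blast
    obtain K where hK: "\<And>k. k \<ge> K \<Longrightarrow> nk k \<ge> N"
      using inj_tendsto_top[OF enum, of N] unfolding eventually_sequentially by blast
    have "\<forall>k\<ge>max K 1. norm (z (nk k) - w (nk k)) / lam (nk k) < r \<and> norm (z (Suc (nk k)) - z (nk k)) / lam (nk k) < r"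
      using hN hK nkI by simp
    moreover have "\<forall>k\<ge>1. lam (nk k) > 0" using lampos nk1 by blast
    ultimately have H: "\<forall>k\<ge>max K 1. \<bar>norm (z (nk k) - w (nk k)) / lam (nk k)\<bar> < r \<and> \<bar>norm (z (Suc (nk k)) - z (nk k)) / lam (nk k)\<bar> < r"
      by auto
    show "\<exists>no. \<forall>n\<ge>no. norm (norm (z (nk n) - w (nk n)) / lam (nk n) - 0) < r"
      using H by (intro exI[of _ "max K 1"]) auto
    show "\<exists>no. \<forall>n\<ge>no. norm (norm (z (Suc (nk n)) - z (nk n)) / lam (nk n) - 0) < r"
      using H by (intro exI[of _ "max K 1"]) auto
  qed
qed

end
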